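(* For every integer $n\ge 1$, the set \[U_n=\{t_it_{n+j}-t_jt_{n+i} : 1\le i<j\le n\}\] is a universal Gröbner basis of the toric ideal $I_{S_n}$, i.e. it is a Gröbner basis of $I_{S_n}$ with respect to every monomial order.
   Context: With $e_i\in\mathbb{R}^{n+1}$ the standard basis vectors, let $s_i=e_1+e_{i+1}+e_{n+1}$ for $1\le i<n$, $s_n=e_1+e_{n+1}$, $s_i=e_{i+1-n}+e_{n+1}$ for $n<i<2n$, $s_{2n}=e_{n+1}$ (the nonzero codewords of the homogeneous star code $S_n$). The toric ideal $I_{S_n}$ is the kernel of the ring homomorphism $\mathbb{C}[t_1,\dots,t_{2n}]\to\mathbb{C}[x_1,\dots,x_{n+1}]$, $t_i\mapsto x^{s_i}$, where $x^a=x_1^{a_1}\cdots x_{n+1}^{a_{n+1}}$. *)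

theory Defs
  imports Complex_Main "HOL-Library.Poly_Mapping"
begin

text \<open>Multivariate polynomials over the complex numbers, represented as finitely
  supported maps from exponent vectors (monomials, finitely supported maps
  nat to nat; variable k has index k) to coefficients.\<close>

type_synonym mon = "nat \<Rightarrow>\<^sub>0 nat"
type_synonym cpoly = "mon \<Rightarrow>\<^sub>0 complex"

definition ev :: "nat \<Rightarrow> mon" where
  "ev k = Poly_Mapping.single k 1"

definition scode :: "nat \<Rightarrow> nat \<Rightarrow> mon" where
  "scode n i =
     (if 1 \<le> i \<and> i < n then ev 1 + ev (i+1) + ev (n+1)
      else if i = n then ev 1 + ev (n+1)
      else if n < i \<and> i < 2*n then ev (i+1-n) + ev (n+1)
      else ev (n+1))"

definition var :: "nat \<Rightarrow> cpoly" where
  "var i = Poly_Mapping.single (ev i) 1"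

definition polys_in :: "nat \<Rightarrow> cpoly set" where
  "polys_in m = {f::cpoly. \<forall>a::mon. a \<in> Poly_Mapping.keys f \<longrightarrow> Poly_Mapping.keys a \<subseteq> {1..m}}"

definition toric_hom :: "nat \<Rightarrow> cpoly \<Rightarrow> cpoly" where
  "toric_hom n f =
     (\<Sum>a\<in>Poly_Mapping.keys f. Poly_Mapping.single 0 (Poly_Mapping.lookup f a) *
        (\<Prod>i\<in>{1..2*n}. (Poly_Mapping.single (scode n i) 1) ^ Poly_Mapping.lookup a i))"

definition toric_ideal :: "nat \<Rightarrow> cpoly set" where
  "toric_ideal n = {f \<in> polys_in (2*n). toric_hom n f = 0}"

definition U :: "nat \<Rightarrow> cpoly set" where
  "U n = {var i * var (n+j) - var j * var (n+i) | i j. 1 \<le> i \<and> i < j \<and> j \<le> n}"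

definition monomial_order :: "nat set \<Rightarrow> (mon \<Rightarrow> mon \<Rightarrow> bool) \<Rightarrow> bool" where
  "monomial_order V le \<longleftrightarrow>
     (let M = {a. Poly_Mapping.keys a \<subseteq> V} in
       (\<forall>a\<in>M. le a a) \<and>
       (\<forall>a\<in>M. \<forall>b\<in>M. le a b \<and> le b a \<longrightarrow> a = b) \<and>
       (\<forall>a\<in>M. \<forall>b\<in>M. \<forall>c\<in>M. le a b \<and> le b c \<longrightarrow> le a c) \<and>
       (\<forall>a\<in>M. \<forall>b\<in>M. le a b \<or> le b a) \<and>
       (\<forall>a\<in>M. \<forall>b\<in>M. \<forall>c\<in>M. le a b \<longrightarrow> le (a + c) (b + c)) \<and>
       (\<forall>S\<subseteq>M. S \<noteq> {} \<longrightarrow> (\<exists>a\<in>S. \<forall>b\<in>S. le a b)))"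

definition lead_mon :: "(mon \<Rightarrow> mon \<Rightarrow> bool) \<Rightarrow> cpoly \<Rightarrow> mon" where
  "lead_mon le f = (THE a. a \<in> Poly_Mapping.keys f \<and> (\<forall>b\<in>Poly_Mapping.keys f. le b a))"

definition mon_dvd :: "mon \<Rightarrow> mon \<Rightarrow> bool" where
  "mon_dvd a b \<longleftrightarrow> (\<exists>c. b = a + c)"

definition groebner_basis :: "(mon \<Rightarrow> mon \<Rightarrow> bool) \<Rightarrow> cpoly set \<Rightarrow> cpoly set \<Rightarrow> bool" where
  "groebner_basis le I G \<longleftrightarrow>
     finite G \<and> G \<subseteq> I \<and>
     (\<forall>f\<in>I. f \<noteq> 0 \<longrightarrow> (\<exists>g\<in>G. g \<noteq> 0 \<and> mon_dvd (lead_mon le g) (lead_mon le f)))"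

definition universal_groebner_basis :: "nat set \<Rightarrow> cpoly set \<Rightarrow> cpoly set \<Rightarrow> bool" where
  "universal_groebner_basis V I G \<longleftrightarrow>
     (\<forall>le. monomial_order V le \<longrightarrow> groebner_basis le I G)"

end

theory Submission
  imports Defs
begin


lemma single_pow: "(Poly_Mapping.single (m::mon) (1::complex)) ^ k = Poly_Mapping.single (\<Sum>_\<in>{..<k}. m) 1"
  by (induction k) (simp_all add: mult_single add.commute del: sum_constant)

lemma prod_single: "finite A \<Longrightarrow> (\<Prod>i\<in>A. Poly_Mapping.single ((g i)::mon) (1::complex)) = Poly_Mapping.single (\<Sum>i\<in>A. g i) 1"
  by (induction A rule: finite_induct) (simp_all add: mult_single)

definition mm :: "nat \<Rightarrow> mon \<Rightarrow> mon" where
  "mm n a = (\<Sum>i\<in>{1..2*n}. \<Sum>_\<in>{..<Poly_Mapping.lookup a i}. scode n i)"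

lemma lookup_mm: "Poly_Mapping.lookup (mm n a) c = (\<Sum>i\<in>{1..2*n}. Poly_Mapping.lookup a i * Poly_Mapping.lookup (scode n i) c)"
  unfolding mm_def lookup_sum by simp

lemma toric_hom_eq: "toric_hom n f = (\<Sum>a\<in>Poly_Mapping.keys f. Poly_Mapping.single (mm n a) (Poly_Mapping.lookup f a))"
  unfolding toric_hom_def
  by (simp add: single_pow prod_single mult_single mm_def del: sum_constant)

lemma fiber_exists:
  assumes "toric_hom n f = 0" "u \<in> Poly_Mapping.keys f"
  shows "\<exists>a\<in>Poly_Mapping.keys f. a \<noteq> u \<and> mm n a = mm n u"
proof (rule ccontr)
  assume H: "\<not> ?thesis"
  have "0 = Poly_Mapping.lookup (toric_hom n f) (mm n u)" using assms by simp
  also have "\<dots> = (\<Sum>a\<in>Poly_Mapping.keys f. (Poly_Mapping.lookup f a when mm n a = mm n u))"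
    by (simp add: toric_hom_eq lookup_sum lookup_single)
  also have "\<dots> = (\<Sum>a\<in>{u}. (Poly_Mapping.lookup f a when mm n a = mm n u))"
    using H assms(2) by (intro sum.mono_neutral_right) auto
  also have "\<dots> = Poly_Mapping.lookup f u" by simp
  finally show False using assms(2) by (simp add: in_keys_iff)
qed



definition col :: "nat \<Rightarrow> mon \<Rightarrow> nat \<Rightarrow> nat" where
  "col n a k = Poly_Mapping.lookup a k + Poly_Mapping.lookup a (n+k)"
definition row :: "nat \<Rightarrow> mon \<Rightarrow> nat" where
  "row n a = (\<Sum>i\<in>{1..n}. Poly_Mapping.lookup a i)"

lemma lookup_ev: "Poly_Mapping.lookup (ev k) c = (if k = c then 1 else 0)"
  by (simp add: ev_def lookup_single when_def)

lemma lookup_scode: "Poly_Mapping.lookup (scode n i) c =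
     (if 1 \<le> i \<and> i < n then (if c = 1 then 1 else 0) + (if c = i+1 then 1 else 0) + (if c = n+1 then 1 else 0)
      else if i = n then (if c = 1 then 1 else 0) + (if c = n+1 then 1 else 0)
      else if n < i \<and> i < 2*n then (if c = i+1-n then 1 else 0) + (if c = n+1 then 1 else 0)
      else (if c = n+1 then 1 else 0))"
  by (simp add: scode_def lookup_add lookup_ev)

lemma sum_split2: "(\<Sum>i\<in>{1..2*(n::nat)}. g i) = (\<Sum>k\<in>{1..n}. (g k + g (n+k)::nat))"
proof -
  have "{1..2*n} = {1..n} \<union> (\<lambda>k. n+k) ` {1..n}" proof (intro set_eqI iffI) fix x::nat assume "x \<in> {1..2*n}" then show "x \<in> {1..n} \<union> (\<lambda>k. n+k) ` {1..n}" by (cases "x \<le> n") (auto simp: image_iff intro!: bexI[of _ "x-n"]) qed auto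
  moreover have "{1..n} \<inter> (\<lambda>k. n+k) ` {1..n} = {}" by auto
  ultimately have "(\<Sum>i\<in>{1..2*n}. g i) = (\<Sum>i\<in>{1..n}. g i) + (\<Sum>i\<in>(\<lambda>k. n+k) ` {1..n}. g i)"
    by (simp add: sum.union_disjoint)
  also have "(\<Sum>i\<in>(\<lambda>k. n+k) ` {1..n}. g i) = (\<Sum>k\<in>{1..n}. g (n+k))"
    by (subst sum.reindex) (auto simp: inj_on_def)
  finally show ?thesis by (simp add: sum.distrib)
qed

lemma sc1: "1 \<le> n \<Longrightarrow> 1 \<le> i \<Longrightarrow> i \<le> 2*n \<Longrightarrow> Poly_Mapping.lookup (scode n i) 1 = (if i \<le> n then 1 else 0)"
  unfolding lookup_scode by (cases "i < n"; cases "i = n"; cases "i < 2*n") simp_all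
lemma sctot: "1 \<le> n \<Longrightarrow> 1 \<le> i \<Longrightarrow> i \<le> 2*n \<Longrightarrow> Poly_Mapping.lookup (scode n i) (n+1) = 1"
  unfolding lookup_scode by (cases "i < n"; cases "i = n"; cases "i < 2*n") simp_all
lemma sck: "1 \<le> k \<Longrightarrow> k < n \<Longrightarrow> 1 \<le> i \<Longrightarrow> i \<le> 2*n \<Longrightarrow> Poly_Mapping.lookup (scode n i) (k+1) = (if i \<in> {k, n+k} then 1 else 0)"
  unfolding lookup_scode by (cases "i < n"; cases "i = n"; cases "i < 2*n") auto

lemma mm_c1: assumes "1 \<le> n" shows "Poly_Mapping.lookup (mm n a) 1 = row n a"
proof -
  have "Poly_Mapping.lookup (mm n a) 1 = (\<Sum>i\<in>{1..2*n}. if i \<le> n then Poly_Mapping.lookup a i else 0)"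
    unfolding lookup_mm proof (intro sum.cong refl) fix i assume "i \<in> {1..2*n}" then show "Poly_Mapping.lookup a i * Poly_Mapping.lookup (scode n i) 1 = (if i \<le> n then Poly_Mapping.lookup a i else 0)" using sc1[OF assms, of i] by simp qed
  also have "\<dots> = (\<Sum>i\<in>{i\<in>{1..2*n}. i \<le> n}. Poly_Mapping.lookup a i)"
    by (rule sum.inter_filter[symmetric]) simp
  also have "{i\<in>{1..2*n}. i \<le> n} = {1..n}" by auto
  finally show ?thesis by (simp add: row_def)
qed

lemma mm_ctot: assumes "1 \<le> n" shows "Poly_Mapping.lookup (mm n a) (n+1) = (\<Sum>k\<in>{1..n}. col n a k)"
proof -
  have "Poly_Mapping.lookup (mm n a) (n+1) = (\<Sum>i\<in>{1..2*n}. Poly_Mapping.lookup a i)"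
    unfolding lookup_mm proof (intro sum.cong refl) fix i assume "i \<in> {1..2*n}" then show "Poly_Mapping.lookup a i * Poly_Mapping.lookup (scode n i) (n+1) = Poly_Mapping.lookup a i" using sctot[OF assms, of i] by simp qed
  then show ?thesis using sum_split2[of "Poly_Mapping.lookup a" n] by (simp add: col_def)
qed

lemma mm_ck: assumes "1 \<le> k" "k < n" shows "Poly_Mapping.lookup (mm n a) (k+1) = col n a k"
proof -
  have "Poly_Mapping.lookup (mm n a) (k+1) = (\<Sum>i\<in>{1..2*n}. if i \<in> {k, n+k} then Poly_Mapping.lookup a i else 0)"
    unfolding lookup_mm proof (intro sum.cong refl) fix i assume "i \<in> {1..2*n}" then show "Poly_Mapping.lookup a i * Poly_Mapping.lookup (scode n i) (k+1) = (if i \<in> {k, n+k} then Poly_Mapping.lookup a i else 0)" using sck[OF assms, of i] by simp qed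
  also have "\<dots> = (\<Sum>i\<in>{1..2*n} \<inter> {k, n+k}. Poly_Mapping.lookup a i)"
    by (simp add: sum.inter_restrict)
  also have "{1..2*n} \<inter> {k, n+k} = {k, n+k}" using assms by auto
  finally show ?thesis using assms by (simp add: col_def)
qed

lemma mm_fiber:
  assumes "1 \<le> n" "mm n a = mm n b"
  shows "(\<forall>k\<in>{1..n}. col n a k = col n b k) \<and> row n a = row n b"
proof -
  have r: "row n a = row n b" using mm_c1[OF assms(1)] assms(2) by metis
  have lt: "col n a k = col n b k" if "1 \<le> k" "k < n" for k
    using mm_ck[OF that] assms(2) by metis
  have tot: "(\<Sum>k\<in>{1..n}. col n a k) = (\<Sum>k\<in>{1..n}. col n b k)"
    using mm_ctot[OF assms(1)] assms(2) by metis
  have ins: "{1..n} = insert n {1..<n}" using assms(1) by auto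
  have "(\<Sum>k\<in>{1..<n}. col n a k) = (\<Sum>k\<in>{1..<n}. col n b k)"
    using lt by (intro sum.cong) auto
  with tot have "col n a n = col n b n" unfolding ins by simp
  with lt r show ?thesis
    by (metis atLeastAtMost_iff le_neq_implies_less)
qed



lemma fiber_diff:
  assumes "Poly_Mapping.keys a \<subseteq> {1..2*n}" "Poly_Mapping.keys b \<subseteq> {1..2*n}" "a \<noteq> b"
    "\<forall>k\<in>{1..n}. col n a k = col n b k" "row n a = row n b"
  shows "\<exists>i\<in>{1..n}. \<exists>j\<in>{1..n}. Poly_Mapping.lookup b i < Poly_Mapping.lookup a i \<and> Poly_Mapping.lookup a j < Poly_Mapping.lookup b j"
proof -
  obtain k where k: "Poly_Mapping.lookup a k \<noteq> Poly_Mapping.lookup b k"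
    using assms(3) by (metis poly_mapping_eqI)
  have kV: "k \<in> {1..2*n}"
  proof (rule ccontr)
    assume "k \<notin> {1..2*n}"
    then have "k \<notin> Poly_Mapping.keys a" "k \<notin> Poly_Mapping.keys b" using assms(1,2) by auto
    then show False using k by (simp add: in_keys_iff)
  qed
  obtain k0 where k0: "k0 \<in> {1..n}" "Poly_Mapping.lookup a k0 \<noteq> Poly_Mapping.lookup b k0"
  proof (cases "k \<le> n")
    case True then show ?thesis using that k kV by auto
  next
    case False
    then have "k - n \<in> {1..n}" "n + (k - n) = k" using kV by auto
    moreover have "col n a (k-n) = col n b (k-n)" using assms(4) calculation(1) by blast
    ultimately show ?thesis using that k unfolding col_def by (metis add_left_cancel)
  qed
  have gen: "\<exists>j\<in>{1..n}. Poly_Mapping.lookup x j < Poly_Mapping.lookup y j"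
    if "row n x = row n y" "Poly_Mapping.lookup y k0 < Poly_Mapping.lookup x k0" for x y
  proof (rule ccontr)
    assume "\<not> ?thesis"
    then have "\<forall>j\<in>{1..n}. Poly_Mapping.lookup y j \<le> Poly_Mapping.lookup x j" by auto
    then have "row n y < row n x" unfolding row_def
      using k0(1) that(2) by (intro sum_strict_mono_ex1) auto
    then show False using that(1) by simp
  qed
  show ?thesis
  proof (cases "Poly_Mapping.lookup b k0 < Poly_Mapping.lookup a k0")
    case True then show ?thesis using gen[of a b] assms(5) k0(1) by blast
  next
    case False
    then have "Poly_Mapping.lookup a k0 < Poly_Mapping.lookup b k0" using k0(2) by simp
    then show ?thesis using gen[of b a] assms(5) k0(1) by auto
  qed
qed

lemma col_add: "col n (x + y) k = col n x k + col n y k"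
  by (simp add: col_def lookup_add)
lemma row_add: "row n (x + y) = row n x + row n y"
  by (simp add: row_def lookup_add sum.distrib)

lemma col_PQ: assumes "i \<in> {1..n}" "j \<in> {1..n}" "k \<in> {1..n}"
  shows "col n (ev i + ev (n+j)) k = col n (ev j + ev (n+i)) k"
  using assms by (simp add: col_def lookup_add lookup_ev)

lemma row_ev: assumes "i \<in> {1..n}" "j \<in> {1..n}"
  shows "row n (ev i + ev (n+j)) = 1"
proof -
  have "row n (ev i + ev (n+j)) = (\<Sum>k\<in>{1..n}. if i = k then 1 else 0)"
    unfolding row_def using assms by (intro sum.cong) (auto simp: lookup_add lookup_ev)
  also have "\<dots> = 1" using assms by simp
  finally show ?thesis .
qed



lemma mo_conj0:
  assumes "monomial_order V le"
  shows "(\<forall>a\<in>{a. Poly_Mapping.keys a \<subseteq> V}. le a a)"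
  using assms unfolding monomial_order_def Let_def by (elim conjE) assumption

lemma mo_conj1:
  assumes "monomial_order V le"
  shows "(\<forall>a\<in>{a. Poly_Mapping.keys a \<subseteq> V}. \<forall>b\<in>{a. Poly_Mapping.keys a \<subseteq> V}. le a b \<and> le b a \<longrightarrow> a = b)"
  using assms unfolding monomial_order_def Let_def by (elim conjE) assumption

lemma mo_conj2:
  assumes "monomial_order V le"
  shows "(\<forall>a\<in>{a. Poly_Mapping.keys a \<subseteq> V}. \<forall>b\<in>{a. Poly_Mapping.keys a \<subseteq> V}. \<forall>c\<in>{a. Poly_Mapping.keys a \<subseteq> V}. le a b \<and> le b c \<longrightarrow> le a c)"
  using assms unfolding monomial_order_def Let_def by (elim conjE) assumption

lemma mo_conj3:
  assumes "monomial_order V le"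
  shows "(\<forall>a\<in>{a. Poly_Mapping.keys a \<subseteq> V}. \<forall>b\<in>{a. Poly_Mapping.keys a \<subseteq> V}. le a b \<or> le b a)"
  using assms unfolding monomial_order_def Let_def by (elim conjE) assumption

lemma mo_conj4:
  assumes "monomial_order V le"
  shows "(\<forall>a\<in>{a. Poly_Mapping.keys a \<subseteq> V}. \<forall>b\<in>{a. Poly_Mapping.keys a \<subseteq> V}. \<forall>c\<in>{a. Poly_Mapping.keys a \<subseteq> V}. le a b \<longrightarrow> le (a + c) (b + c))"
  using assms unfolding monomial_order_def Let_def by (elim conjE) assumption

lemma mo_facts:
  assumes "monomial_order V le"
  shows mo_refl: "\<And>a. Poly_Mapping.keys a \<subseteq> V \<Longrightarrow> le a a"
    and mo_antisym: "\<And>a b. Poly_Mapping.keys a \<subseteq> V \<Longrightarrow> Poly_Mapping.keys b \<subseteq> V \<Longrightarrow> le a b \<Longrightarrow> le b a \<Longrightarrow> a = b"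
    and mo_trans: "\<And>a b c. Poly_Mapping.keys a \<subseteq> V \<Longrightarrow> Poly_Mapping.keys b \<subseteq> V \<Longrightarrow> Poly_Mapping.keys c \<subseteq> V \<Longrightarrow> le a b \<Longrightarrow> le b c \<Longrightarrow> le a c"
    and mo_total: "\<And>a b. Poly_Mapping.keys a \<subseteq> V \<Longrightarrow> Poly_Mapping.keys b \<subseteq> V \<Longrightarrow> le a b \<or> le b a"
    and mo_add: "\<And>a b c. Poly_Mapping.keys a \<subseteq> V \<Longrightarrow> Poly_Mapping.keys b \<subseteq> V \<Longrightarrow> Poly_Mapping.keys c \<subseteq> V \<Longrightarrow> le a b \<Longrightarrow> le (a + c) (b + c)"
  using mo_conj0[OF assms] mo_conj1[OF assms] mo_conj2[OF assms] mo_conj3[OF assms] mo_conj4[OF assms] unfolding mem_Collect_eq by blast+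

lemma keys_ev[simp]: "Poly_Mapping.keys (ev k) = {k}"
  by (simp add: ev_def)

lemma keys_add_sub: "Poly_Mapping.keys a \<subseteq> V \<Longrightarrow> Poly_Mapping.keys b \<subseteq> V \<Longrightarrow> Poly_Mapping.keys (a + b) \<subseteq> V"
  using keys_add[of a b] by blast

lemma keys_minus_sub: "Poly_Mapping.keys (a::mon) \<subseteq> V \<Longrightarrow> Poly_Mapping.keys (a - b) \<subseteq> V"
  by (auto simp: in_keys_iff lookup_minus)

lemma max_exists:
  assumes mo: "monomial_order V le"
  shows "finite F \<Longrightarrow> F \<noteq> {} \<Longrightarrow> (\<forall>a\<in>F. Poly_Mapping.keys a \<subseteq> V) \<Longrightarrow> \<exists>a\<in>F. \<forall>b\<in>F. le b a"
proof (induction F rule: finite_ne_induct)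
  case (singleton x) then show ?case using mo_refl[OF mo] by auto
next
  case (insert x F)
  then obtain m where m: "m \<in> F" "\<forall>b\<in>F. le b m" by auto
  show ?case
  proof (cases "le m x")
    case True
    then show ?thesis using m insert.prems mo_trans[OF mo] mo_refl[OF mo]
      by (metis insert_iff)
  next
    case False
    then have "le x m" using mo_total[OF mo] insert.prems m(1) by blast
    then show ?thesis using m by auto
  qed
qed

lemma lead_mon_eq:
  assumes mo: "monomial_order V le" and kf: "\<forall>a\<in>Poly_Mapping.keys f. Poly_Mapping.keys a \<subseteq> V"
    and u: "u \<in> Poly_Mapping.keys f" "\<forall>b\<in>Poly_Mapping.keys f. le b u"
  shows "lead_mon le f = u"
  unfolding lead_mon_def
proof (rule the_equality)
  show "u \<in> Poly_Mapping.keys f \<and> (\<forall>b\<in>Poly_Mapping.keys f. le b u)" using u by auto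
next
  fix a assume "a \<in> Poly_Mapping.keys f \<and> (\<forall>b\<in>Poly_Mapping.keys f. le b a)"
  then show "a = u" using u kf mo_antisym[OF mo] by blast
qed

definition dd :: "nat \<Rightarrow> mon \<Rightarrow> mon \<Rightarrow> nat" where
  "dd n a b = (\<Sum>k\<in>{1..2*n}. (Poly_Mapping.lookup a k - Poly_Mapping.lookup b k) + (Poly_Mapping.lookup b k - Poly_Mapping.lookup a k))"

lemma mainB:
  assumes mo: "monomial_order {1..2*n} le" and ka: "Poly_Mapping.keys a \<subseteq> {1..2*n}"
  shows "Poly_Mapping.keys b \<subseteq> {1..2*n} \<Longrightarrow> a \<noteq> b \<Longrightarrow> le b a \<Longrightarrow> (\<forall>k\<in>{1..n}. col n a k = col n b k)
    \<Longrightarrow> row n a = row n b \<Longrightarrow>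
    \<exists>i\<in>{1..n}. \<exists>j\<in>{1..n}. i \<noteq> j \<and> le (ev j + ev (n+i)) (ev i + ev (n+j)) \<and> mon_dvd (ev i + ev (n+j)) a"
proof (induction "dd n a b" arbitrary: b rule: less_induct)
  case less
  let ?V = "{1..2*n}"
  obtain i j where ij: "i \<in> {1..n}" "j \<in> {1..n}"
    and h1: "Poly_Mapping.lookup b i < Poly_Mapping.lookup a i"
    and h2: "Poly_Mapping.lookup a j < Poly_Mapping.lookup b j"
    using fiber_diff[OF ka less.prems(1,2,4,5)] by blast
  have "col n a j = col n b j" "col n a i = col n b i" using less.prems(4) ij by auto
  then have h3: "Poly_Mapping.lookup b (n+j) < Poly_Mapping.lookup a (n+j)"
    and h4: "Poly_Mapping.lookup a (n+i) < Poly_Mapping.lookup b (n+i)"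
    using h1 h2 unfolding col_def by linarith+
  have ij_ne: "i \<noteq> j" using h1 h2 by auto
  define P where "P = ev i + ev (n+j)"
  define Q where "Q = ev j + ev (n+i)"
  have lP: "Poly_Mapping.lookup P k = (if k = i then 1 else 0) + (if k = n+j then 1 else 0)" for k
    unfolding P_def by (auto simp: lookup_add lookup_ev)
  have lQ: "Poly_Mapping.lookup Q k = (if k = j then 1 else 0) + (if k = n+i then 1 else 0)" for k
    unfolding Q_def by (auto simp: lookup_add lookup_ev)
  have kP: "Poly_Mapping.keys P \<subseteq> ?V" unfolding P_def using ij
    by (intro keys_add_sub) auto
  have kQ: "Poly_Mapping.keys Q \<subseteq> ?V" unfolding Q_def using ij
    by (intro keys_add_sub) auto
  have PQ: "P \<noteq> Q"
  proof
    assume "P = Q"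
    then have "Poly_Mapping.lookup P i = Poly_Mapping.lookup Q i" by simp
    then show False using ij ij_ne by (simp add: lP lQ)
  qed
  have dvdP: "mon_dvd P a" unfolding mon_dvd_def
  proof (intro exI poly_mapping_eqI)
    fix k
    show "Poly_Mapping.lookup a k = Poly_Mapping.lookup (P + (a - P)) k"
      using h1 h3 ij by (auto simp: lookup_add lookup_minus lP)
  qed
  show ?case
  proof (cases "le Q P")
    case True
    then show ?thesis using ij ij_ne dvdP unfolding P_def Q_def by blast
  next
    case False
    then have lePQ: "le P Q" using mo_total[OF mo kP kQ] by blast
    define c where "c = b - Q"
    have kc: "Poly_Mapping.keys c \<subseteq> ?V" unfolding c_def using less.prems(1) by (rule keys_minus_sub)
    have bQc: "b = Q + c"
    proof (rule poly_mapping_eqI)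
      fix k
      show "Poly_Mapping.lookup b k = Poly_Mapping.lookup (Q + c) k"
        using h2 h4 ij unfolding c_def by (auto simp: lookup_add lookup_minus lQ)
    qed
    define b' where "b' = P + c"
    have kb': "Poly_Mapping.keys b' \<subseteq> ?V" unfolding b'_def using kP kc by (rule keys_add_sub)
    have le1: "le b' b" unfolding b'_def bQc using mo_add[OF mo kP kQ kc lePQ] .
    have ne1: "b' \<noteq> b" unfolding b'_def bQc using PQ by simp
    have le2: "le b' a" using mo_trans[OF mo kb' less.prems(1) ka le1 less.prems(3)] .
    have ne2: "a \<noteq> b'"
    proof
      assume "a = b'"
      then have "le a b" using le1 by simp
      then have "a = b" using mo_antisym[OF mo ka less.prems(1)] less.prems(3) by blast
      then show False using less.prems(2) by simp
    qed
    have colPQ: "col n P k = col n Q k" if "k \<in> {1..n}" for k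
      unfolding P_def Q_def using col_PQ[OF ij that] .
    have fib1: "\<forall>k\<in>{1..n}. col n a k = col n b' k"
      using less.prems(4) colPQ unfolding b'_def bQc col_add by simp
    have "row n P = row n Q" unfolding P_def Q_def using row_ev[OF ij] row_ev[OF ij(2,1)] by simp
    then have fib2: "row n a = row n b'"
      using less.prems(5) unfolding b'_def bQc row_add by simp
    have lb': "Poly_Mapping.lookup b' k = Poly_Mapping.lookup P k + (Poly_Mapping.lookup b k - Poly_Mapping.lookup Q k)" for k
      unfolding b'_def c_def by (simp add: lookup_add lookup_minus)
    have ltd: "dd n a b' < dd n a b"
      unfolding dd_def
    proof (rule sum_strict_mono_ex1)
      show "finite ?V" by simp
      show "\<forall>k\<in>?V. (Poly_Mapping.lookup a k - Poly_Mapping.lookup b' k) + (Poly_Mapping.lookup b' k - Poly_Mapping.lookup a k)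
         \<le> (Poly_Mapping.lookup a k - Poly_Mapping.lookup b k) + (Poly_Mapping.lookup b k - Poly_Mapping.lookup a k)"
      proof
        fix k assume "k \<in> ?V"
        show "(Poly_Mapping.lookup a k - Poly_Mapping.lookup b' k) + (Poly_Mapping.lookup b' k - Poly_Mapping.lookup a k)
         \<le> (Poly_Mapping.lookup a k - Poly_Mapping.lookup b k) + (Poly_Mapping.lookup b k - Poly_Mapping.lookup a k)"
        proof -
          consider "k = i" | "k = j" | "k = n+i" | "k = n+j" | "k \<noteq> i \<and> k \<noteq> j \<and> k \<noteq> n+i \<and> k \<noteq> n+j" by blast
          then show ?thesis
          proof cases
            case 1 then show ?thesis using h1 ij ij_ne by (simp add: lb' lP lQ)
          next
            case 2 then show ?thesis using h2 ij ij_ne by (simp add: lb' lP lQ)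
          next
            case 3 then show ?thesis using h4 ij ij_ne by (simp add: lb' lP lQ)
          next
            case 4 then show ?thesis using h3 ij ij_ne by (simp add: lb' lP lQ)
          next
            case 5 then show ?thesis by (simp add: lb' lP lQ)
          qed
        qed
      qed
      show "\<exists>k\<in>?V. (Poly_Mapping.lookup a k - Poly_Mapping.lookup b' k) + (Poly_Mapping.lookup b' k - Poly_Mapping.lookup a k)
         < (Poly_Mapping.lookup a k - Poly_Mapping.lookup b k) + (Poly_Mapping.lookup b k - Poly_Mapping.lookup a k)"
        using h1 ij ij_ne by (intro bexI[of _ i]) (auto simp: lb' lP lQ)
    qed
    show ?thesis using less.hyps[OF ltd kb' ne2 le2 fib1 fib2] .
  qed
qed



lemma var_mult: "var i * var k = Poly_Mapping.single (ev i + ev k) 1"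
  by (simp add: var_def mult_single)

lemma keys_binom: assumes "p \<noteq> q"
  shows "Poly_Mapping.keys (Poly_Mapping.single p (1::complex) - Poly_Mapping.single q 1) = {p, q}"
  using assms by (auto simp: in_keys_iff lookup_minus lookup_single when_def split: if_splits)

lemma binom_ne0: assumes "p \<noteq> q"
  shows "Poly_Mapping.single p (1::complex) - Poly_Mapping.single q 1 \<noteq> 0"
  using keys_binom[OF assms] by fastforce

lemma lead_binom:
  assumes mo: "monomial_order V le" and "p \<noteq> q" "Poly_Mapping.keys p \<subseteq> V" "Poly_Mapping.keys q \<subseteq> V" "le q p"
  shows "lead_mon le (Poly_Mapping.single p (1::complex) - Poly_Mapping.single q 1) = p"
    and "lead_mon le (Poly_Mapping.single q (1::complex) - Poly_Mapping.single p 1) = p"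
proof -
  show "lead_mon le (Poly_Mapping.single p (1::complex) - Poly_Mapping.single q 1) = p"
    using assms(2-5) by (intro lead_mon_eq[OF mo]) (auto simp: keys_binom mo_refl[OF mo])
  have "q \<noteq> p" using assms(2) by simp
  then show "lead_mon le (Poly_Mapping.single q (1::complex) - Poly_Mapping.single p 1) = p"
    using assms(2-5) by (intro lead_mon_eq[OF mo]) (auto simp: keys_binom mo_refl[OF mo])
qed

lemma sc_rel: "1 \<le> i \<Longrightarrow> i \<le> n \<Longrightarrow> scode n i = ev 1 + scode n (n+i)"
  unfolding scode_def by (cases "i < n") (auto simp: add.assoc)

lemma mm_ev2: assumes "p \<in> {1..2*n}" "q \<in> {1..2*n}" "p \<noteq> q"
  shows "mm n (ev p + ev q) = scode n p + scode n q"
proof (rule poly_mapping_eqI)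
  fix c
  have "Poly_Mapping.lookup (mm n (ev p + ev q)) c =
     (\<Sum>k\<in>{1..2*n}. (if k = p then Poly_Mapping.lookup (scode n p) c else 0) + (if k = q then Poly_Mapping.lookup (scode n q) c else 0))"
    unfolding lookup_mm by (intro sum.cong) (auto simp: lookup_add lookup_ev)
  also have "\<dots> = Poly_Mapping.lookup (scode n p) c + Poly_Mapping.lookup (scode n q) c"
    using assms by (simp add: sum.distrib)
  finally show "Poly_Mapping.lookup (mm n (ev p + ev q)) c = Poly_Mapping.lookup (scode n p + scode n q) c"
    by (simp add: lookup_add)
qed

lemma mm_PQ: assumes "i \<in> {1..n}" "j \<in> {1..n}" "i \<noteq> j"
  shows "mm n (ev i + ev (n+j)) = mm n (ev j + ev (n+i))"
proof -
  have "mm n (ev i + ev (n+j)) = scode n i + scode n (n+j)"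
    using assms by (intro mm_ev2) auto
  also have "\<dots> = ev 1 + scode n (n+i) + scode n (n+j)" using assms sc_rel[of i n] by simp
  also have "\<dots> = ev 1 + scode n (n+j) + scode n (n+i)" by (simp add: algebra_simps)
  also have "\<dots> = scode n j + scode n (n+i)" using assms sc_rel[of j n] by simp
  also have "\<dots> = mm n (ev j + ev (n+i))"
    using assms by (intro mm_ev2[symmetric]) auto
  finally show ?thesis .
qed

lemma U_elem_in_ideal:
  assumes "i \<in> {1..n}" "j \<in> {1..n}" "i \<noteq> j"
  shows "var i * var (n+j) - var j * var (n+i) \<in> toric_ideal n"
proof -
  define P where "P = ev i + ev (n+j)"
  define Q where "Q = ev j + ev (n+i)"
  have PQ: "P \<noteq> Q"
  proof
    assume "P = Q"
    then have "Poly_Mapping.lookup P i = Poly_Mapping.lookup Q i" by simp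
    then show False using assms unfolding P_def Q_def by (simp add: lookup_add lookup_ev)
  qed
  have g: "var i * var (n+j) - var j * var (n+i) = Poly_Mapping.single P (1::complex) - Poly_Mapping.single Q 1"
    unfolding P_def Q_def by (simp add: var_mult)
  have kP: "Poly_Mapping.keys P \<subseteq> {1..2*n}" unfolding P_def using assms by (intro keys_add_sub) auto
  have kQ: "Poly_Mapping.keys Q \<subseteq> {1..2*n}" unfolding Q_def using assms by (intro keys_add_sub) auto
  have poly: "Poly_Mapping.single P (1::complex) - Poly_Mapping.single Q 1 \<in> polys_in (2*n)"
    unfolding polys_in_def using kP kQ by (auto simp: keys_binom[OF PQ])
  have mmPQ: "mm n P = mm n Q" unfolding P_def Q_def using mm_PQ[OF assms] .
  have "toric_hom n (Poly_Mapping.single P (1::complex) - Poly_Mapping.single Q 1)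
      = Poly_Mapping.single (mm n P) 1 + Poly_Mapping.single (mm n Q) (-1)"
    unfolding toric_hom_eq keys_binom[OF PQ] using PQ
    by (simp add: lookup_minus lookup_single when_def)
  also have "\<dots> = 0" unfolding mmPQ by (simp flip: single_add)
  finally show ?thesis using poly g unfolding toric_ideal_def by simp
qed

theorem mainTheorem2:
  fixes n :: nat
  assumes "1 \<le> n"
  shows "universal_groebner_basis {1..2*n} (toric_ideal n) (U n)"
  unfolding universal_groebner_basis_def
proof (intro allI impI)
  fix le assume mo: "monomial_order {1..2*n} le"
  let ?g = "\<lambda>(i,j). var i * var (n+j) - var j * var (n+i)"
  have fin: "finite (U n)"
  proof (rule finite_subset)
    show "U n \<subseteq> ?g ` ({1..n} \<times> {1..n})" unfolding U_def by force
  qed simp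
  have sub: "U n \<subseteq> toric_ideal n"
    unfolding U_def using U_elem_in_ideal by force
  have lead: "\<exists>g\<in>U n. g \<noteq> 0 \<and> mon_dvd (lead_mon le g) (lead_mon le f)"
    if f: "f \<in> toric_ideal n" "f \<noteq> 0" for f
  proof -
    have kf: "\<forall>a\<in>Poly_Mapping.keys f. Poly_Mapping.keys a \<subseteq> {1..2*n}"
      using f(1) unfolding toric_ideal_def polys_in_def by auto
    have th: "toric_hom n f = 0" using f(1) unfolding toric_ideal_def by auto
    obtain u where u: "u \<in> Poly_Mapping.keys f" "\<forall>b\<in>Poly_Mapping.keys f. le b u"
      using max_exists[OF mo, of "Poly_Mapping.keys f"] f(2) kf by auto
    have lu: "lead_mon le f = u" using lead_mon_eq[OF mo kf u] .
    obtain a where a: "a \<in> Poly_Mapping.keys f" "a \<noteq> u" "mm n a = mm n u"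
      using fiber_exists[OF th u(1)] by blast
    have fib: "(\<forall>k\<in>{1..n}. col n u k = col n a k) \<and> row n u = row n a"
      using mm_fiber[OF assms] a(3) by metis
    obtain i j where ij: "i \<in> {1..n}" "j \<in> {1..n}" "i \<noteq> j"
      and leQP: "le (ev j + ev (n+i)) (ev i + ev (n+j))" and dv: "mon_dvd (ev i + ev (n+j)) u"
      using mainB[OF mo, of u a] kf u a fib by metis
    define P where "P = ev i + ev (n+j)"
    define Q where "Q = ev j + ev (n+i)"
    have PQ: "P \<noteq> Q"
    proof
      assume "P = Q"
      then have "Poly_Mapping.lookup P i = Poly_Mapping.lookup Q i" by simp
      then show False using ij unfolding P_def Q_def by (simp add: lookup_add lookup_ev)
    qed
    have kP: "Poly_Mapping.keys P \<subseteq> {1..2*n}" unfolding P_def using ij by (intro keys_add_sub) auto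
    have kQ: "Poly_Mapping.keys Q \<subseteq> {1..2*n}" unfolding Q_def using ij by (intro keys_add_sub) auto
    note LB = lead_binom[OF mo PQ kP kQ leQP[folded P_def Q_def]]
    show ?thesis
    proof (cases "i < j")
      case True
      have "var i * var (n+j) - var j * var (n+i) \<in> U n" unfolding U_def using True ij by auto
      moreover have "var i * var (n+j) - var j * var (n+i) = Poly_Mapping.single P (1::complex) - Poly_Mapping.single Q 1"
        unfolding P_def Q_def by (simp add: var_mult)
      ultimately show ?thesis using LB(1) binom_ne0[OF PQ] dv lu unfolding P_def by metis
    next
      case False
      then have "j < i" using ij by simp
      then have "var j * var (n+i) - var i * var (n+j) \<in> U n" unfolding U_def using ij by auto
      moreover have "var j * var (n+i) - var i * var (n+j) = Poly_Mapping.single Q (1::complex) - Poly_Mapping.single P 1"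
        unfolding P_def Q_def by (simp add: var_mult)
      moreover have "Q \<noteq> P" using PQ by simp
      ultimately show ?thesis using LB(2) binom_ne0 dv lu unfolding P_def by metis
    qed
  qed
  show "groebner_basis le (toric_ideal n) (U n)"
    unfolding groebner_basis_def using fin sub lead by blast
qed


end
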